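(* Let $G$ be a $3$-free digraph. Let $S$ be the number of ordered $4$-tuples $(a,b,c,d)$ of distinct vertices such that the subgraph induced on $\{a,b,c,d\}$ is a directed cycle of length $4$, and let $N$ be the set of all $4$-tuples $(p,q,r,s)\in V(G)^4$ (repetitions allowed) for which there is no directed path in $G$ with exactly four vertices whose vertex set is $\{p,q,r,s\}$. Then $|N| \geq \frac{2}{3}S$.
   Context: Digraphs are finite, loopless, with at most one edge $uv$ per ordered pair. A digraph is $3$-free if it has no directed cycle of length at most $3$. A directed path with four vertices is a sequence $v_1,v_2,v_3,v_4$ of distinct vertices with $v_iv_{i+1}\in E(G)$ for $i=1,2,3$. *)

theory Defs
  imports Complex_Main
begin

definition digraph :: "'a set \<Rightarrow> ('a \<times> 'a) set \<Rightarrow> bool" where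
  "digraph V E \<longleftrightarrow> finite V \<and> E \<subseteq> V \<times> V \<and> (\<forall>v. (v, v) \<notin> E)"

definition three_free :: "('a \<times> 'a) set \<Rightarrow> bool" where
  "three_free E \<longleftrightarrow>
     (\<forall>u. (u, u) \<notin> E) \<and>
     (\<forall>u v. u \<noteq> v \<longrightarrow> \<not> ((u, v) \<in> E \<and> (v, u) \<in> E)) \<and>
     (\<forall>u v w. distinct [u, v, w] \<longrightarrow> \<not> ((u, v) \<in> E \<and> (v, w) \<in> E \<and> (w, u) \<in> E))"

definition induced_C4 :: "('a \<times> 'a) set \<Rightarrow> 'a set \<Rightarrow> bool" where
  "induced_C4 E X \<longleftrightarrow> card X = 4 \<and>
     (\<exists>w x y z. X = {w, x, y, z} \<and> E \<inter> (X \<times> X) = {(w, x), (x, y), (y, z), (z, w)})"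

definition dpath4 :: "('a \<times> 'a) set \<Rightarrow> 'a \<Rightarrow> 'a \<Rightarrow> 'a \<Rightarrow> 'a \<Rightarrow> bool" where
  "dpath4 E v1 v2 v3 v4 \<longleftrightarrow> distinct [v1, v2, v3, v4] \<and>
     (v1, v2) \<in> E \<and> (v2, v3) \<in> E \<and> (v3, v4) \<in> E"

end

theory Submission
  imports Defs
begin

lemma fin6:
  assumes "P a q r s" "distinct [q,r,s]" "q \<in> {b,c,d}" "r \<in> {b,c,d}" "s \<in> {b,c,d}"
  shows "P a b c d \<or> P a b d c \<or> P a c b d \<or> P a c d b \<or> P a d b c \<or> P a d c b"
  using assms by auto

lemma six: assumes da: "distinct [a,b,c,d]" and dw: "distinct [w,x,y,z]" and X: "{w,x,y,z}={a,b,c,d}"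
  and P: "P w x y z" and rot: "\<And>w x y z. P w x y z \<Longrightarrow> P x y z w"
 shows "P a b c d \<or> P a b d c \<or> P a c b d \<or> P a c d b \<or> P a d b c \<or> P a d c b"
proof -
  have r1: "P x y z w" using rot P .
  have r2: "P y z w x" using rot r1 .
  have r3: "P z w x y" using rot r2 .
  have mw: "w \<in> {a,b,c,d}" "x \<in> {a,b,c,d}" "y \<in> {a,b,c,d}" "z \<in> {a,b,c,d}"
    unfolding X[symmetric] by simp_all
  have ma: "a \<in> {w,x,y,z}" unfolding X by simp
  then consider "a = w" | "a = x" | "a = y" | "a = z" by blast
  then show ?thesis
  proof cases
    case 1 then show ?thesis using P mw da dw by (intro fin6[of P a x y z b c d]) auto
  next
    case 2 then show ?thesis using r1 mw da dw by (intro fin6[of P a y z w b c d]) auto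
  next
    case 3 then show ?thesis using r2 mw da dw by (intro fin6[of P a z w x b c d]) auto
  next
    case 4 then show ?thesis using r3 mw da dw by (intro fin6[of P a w x y b c d]) auto
  qed
qed

lemma fin4: "finite V \<Longrightarrow> finite {(p,q,r,s). p\<in>V \<and> q\<in>V \<and> r\<in>V \<and> s\<in>V \<and> P p q r s}"
  by (rule finite_subset[of _ "V\<times>V\<times>V\<times>V"]) auto

lemma final_arith: "4 * real (r::nat) \<le> real (n::nat) \<Longrightarrow> s \<le> 6 * r \<Longrightarrow> real n \<ge> 2/3 * real (s::nat)"
proof -
  assume a: "4 * real r \<le> real n" and b: "s \<le> 6 * r"
  then have "real s \<le> 6 * real r" by (metis of_nat_le_iff of_nat_mult of_nat_numeral)
  then show ?thesis using a by linarith
qed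

definition Mid :: "('a\<times>'a) set \<Rightarrow> 'a \<Rightarrow> 'a \<Rightarrow> 'a set" where
  "Mid E p q = {x. (p,x)\<in>E \<and> (x,q)\<in>E}"
definition Rl :: "('a\<times>'a) set \<Rightarrow> (('a\<times>'a)\<times>('a\<times>'a)) set" where
  "Rl E = {((a,c),(b,d)). (a,b)\<in>E \<and> (b,c)\<in>E \<and> (c,d)\<in>E \<and> (d,a)\<in>E}"
definition fw :: "('a\<times>'a) set \<Rightarrow> 'a\<times>'a \<Rightarrow> nat" where
  "fw E u = card (Mid E (fst u) (snd u)) * card (Mid E (snd u) (fst u))"

context
  fixes V :: "'a set" and E :: "('a \<times> 'a) set"
  assumes dg: "digraph V E" and tf: "three_free E"
begin

lemma finV: "finite V" using dg by (simp add: digraph_def)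
lemma EV: "E \<subseteq> V \<times> V" using dg by (simp add: digraph_def)
lemma noloop: "(v,v) \<notin> E" using dg by (simp add: digraph_def)
lemma no2: "(u,v) \<in> E \<Longrightarrow> (v,u) \<notin> E"
proof
  assume a: "(u,v) \<in> E" "(v,u) \<in> E"
  have "u \<noteq> v" using a noloop by auto
  moreover have "\<forall>u v. u \<noteq> v \<longrightarrow> \<not> ((u, v) \<in> E \<and> (v, u) \<in> E)"
    using conjunct1[OF conjunct2[OF tf[unfolded three_free_def]]] .
  ultimately show False using a by blast
qed
lemma no3: "(u,v) \<in> E \<Longrightarrow> (v,w) \<in> E \<Longrightarrow> (w,u) \<notin> E"
proof
  assume a: "(u,v) \<in> E" "(v,w) \<in> E" "(w,u) \<in> E"
  have "u \<noteq> v" "v \<noteq> w" "w \<noteq> u" using a noloop by auto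
  then have dd: "distinct [u,v,w]" by simp
  moreover have "\<forall>u v w. distinct [u, v, w] \<longrightarrow> \<not> ((u, v) \<in> E \<and> (v, w) \<in> E \<and> (w, u) \<in> E)"
    using conjunct2[OF conjunct2[OF tf[unfolded three_free_def]]] .
  ultimately show False using a dd by blast
qed

lemma Mid_sub: "Mid E p q \<subseteq> V" using EV by (auto simp: Mid_def)
lemma Mid_fin: "finite (Mid E p q)" using Mid_sub finV finite_subset by blast
lemma Mid_disj: "Mid E p q \<inter> Mid E q p = {}" using no2 by (auto simp: Mid_def)
lemma no_cross: "x \<in> Mid E p q \<Longrightarrow> y \<in> Mid E q p \<Longrightarrow> (x,y) \<notin> E \<and> (y,x) \<notin> E"
  using no3 unfolding Mid_def by blast

lemma Out: "{v. (u,v) \<in> Rl E} = Mid E (fst u) (snd u) \<times> Mid E (snd u) (fst u)"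
  by (cases u) (auto simp: Rl_def Mid_def)
lemma In: "{u. (u,v) \<in> Rl E} = Mid E (snd v) (fst v) \<times> Mid E (fst v) (snd v)"
  by (cases v) (auto simp: Rl_def Mid_def)
lemma Rl_sub: "Rl E \<subseteq> (V\<times>V)\<times>(V\<times>V)" using EV by (auto simp: Rl_def)
lemma Rl_fin: "finite (Rl E)" using Rl_sub finV finite_subset by blast
lemma rot: "((a,c),(b,d)) \<in> Rl E \<Longrightarrow> ((b,d),(c,a)) \<in> Rl E" by (auto simp: Rl_def)

lemma card_Out: "card {v. (u,v) \<in> Rl E} = fw E u"
  by (simp add: Out fw_def card_cartesian_product)
lemma card_In: "card {u. (u,v) \<in> Rl E} = fw E v"
  by (simp add: In fw_def card_cartesian_product)

lemma fw_swap: "fw E (prod.swap u) = fw E u" by (simp add: fw_def)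

lemma G_in_N:
  assumes r: "((a,c),(b,d)) \<in> Rl E" and p: "p \<in> Mid E a c \<union> Mid E c a"
    and q: "q \<in> Mid E a c \<union> Mid E c a"
  shows "b\<in>V \<and> d\<in>V \<and> p\<in>V \<and> q\<in>V \<and>
     \<not> (\<exists>v1 v2 v3 v4. dpath4 E v1 v2 v3 v4 \<and> {v1, v2, v3, v4} = {b, d, p, q})"
proof -
  let ?A = "Mid E a c" let ?B = "Mid E c a"
  have bA: "b \<in> ?A" and dB: "d \<in> ?B" using r by (auto simp: Rl_def Mid_def)
  have dA: "d \<notin> ?A" using dB Mid_disj[of a c] by auto
  have side: "x \<in> ?A \<longleftrightarrow> y \<in> ?A" if x: "x \<in> ?A \<union> ?B" and y: "y \<in> ?A \<union> ?B" and e: "(x,y) \<in> E" for x y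
  proof
    assume "x \<in> ?A" then have "y \<notin> ?B" using no_cross[of x a c y] e by auto
    then show "y \<in> ?A" using y by auto
  next
    assume "y \<in> ?A" then have "x \<notin> ?B" using no_cross[of y a c x] e by auto
    then show "x \<in> ?A" using x by auto
  qed
  have V: "b\<in>V \<and> d\<in>V \<and> p\<in>V \<and> q\<in>V" using Mid_sub[of a c] Mid_sub[of c a] bA dB p q by auto
  have "\<not> (\<exists>v1 v2 v3 v4. dpath4 E v1 v2 v3 v4 \<and> {v1, v2, v3, v4} = {b, d, p, q})"
  proof
    assume "\<exists>v1 v2 v3 v4. dpath4 E v1 v2 v3 v4 \<and> {v1, v2, v3, v4} = {b, d, p, q}"
    then obtain v1 v2 v3 v4 where dp: "dpath4 E v1 v2 v3 v4" and st: "{v1, v2, v3, v4} = {b, d, p, q}"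
      by blast
    have sub: "{b, d, p, q} \<subseteq> ?A \<union> ?B" using bA dB p q by auto
    then have m: "v1 \<in> ?A \<union> ?B" "v2 \<in> ?A \<union> ?B" "v3 \<in> ?A \<union> ?B" "v4 \<in> ?A \<union> ?B"
      unfolding st[symmetric] by auto
    have e: "(v1,v2) \<in> E" "(v2,v3) \<in> E" "(v3,v4) \<in> E" using dp by (auto simp: dpath4_def)
    have eq: "(v1 \<in> ?A \<longleftrightarrow> v2 \<in> ?A)" "(v2 \<in> ?A \<longleftrightarrow> v3 \<in> ?A)" "(v3 \<in> ?A \<longleftrightarrow> v4 \<in> ?A)"
      using side[OF m(1) m(2) e(1)] side[OF m(2) m(3) e(2)] side[OF m(3) m(4) e(3)] by auto
    have "b \<in> {v1, v2, v3, v4}" "d \<in> {v1, v2, v3, v4}" unfolding st by auto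
    then show False using eq bA dA by auto
  qed
  then show ?thesis using V by blast
qed

lemma sq4: "4*(x::nat)*y \<le> (x+y)^2"
proof -
  have "int (4*x*y) \<le> int ((x+y)^2)"
    using zero_le_power2[of "int x - int y"] by (simp add: power2_eq_square algebra_simps)
  then show ?thesis by linarith
qed

lemma ratio: assumes "(a::real) > 0" "b > 0" shows "a/b + b/a \<ge> 2"
proof -
  have "a*a + b*b \<ge> 2*a*b" using zero_le_power2[of "a - b"] by (simp add: power2_eq_square algebra_simps)
  then show ?thesis using assms by (simp add: field_simps)
qed

lemma N_bound:
  "4 * real (card (Rl E)) \<le> real (card {(p, q, r, s). p \<in> V \<and> q \<in> V \<and> r \<in> V \<and> s \<in> V \<and>
                 \<not> (\<exists>v1 v2 v3 v4. dpath4 E v1 v2 v3 v4 \<and> {v1, v2, v3, v4} = {p, q, r, s})})"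
  (is "_ \<le> real (card ?N)")
proof -
  define NN where "NN = ?N"
  define In where "In v = {u. (u,v) \<in> Rl E}" for v
  define W where "W u = (Mid E (fst u) (snd u) \<union> Mid E (snd u) (fst u)) \<times> (Mid E (fst u) (snd u) \<union> Mid E (snd u) (fst u))" for u :: "'a\<times>'a"
  define U where "U v = \<Union> (W ` In v)" for v
  define h where "h = (\<lambda>(v::'a\<times>'a, w::'a\<times>'a). (fst v, snd v, fst w, snd w))"
  define T where "T = (SIGMA v:V\<times>V. In v)"
  have finN: "finite NN" unfolding NN_def by (rule fin4[OF finV])
  have inj: "inj h" by (auto simp: h_def inj_def)
  have hsub: "h ` (SIGMA v:V\<times>V. U v) \<subseteq> NN"
  proof
    fix t assume "t \<in> h ` (SIGMA v:V\<times>V. U v)"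
    then obtain b d p q a c where t: "t = (b,d,p,q)" and r: "((a,c),(b,d)) \<in> Rl E"
      and pq: "(p,q) \<in> W (a,c)"
      by (auto simp: h_def U_def In_def)
    have "p \<in> Mid E a c \<union> Mid E c a" "q \<in> Mid E a c \<union> Mid E c a" using pq by (simp_all add: W_def)
    from G_in_N[OF r this] show "t \<in> NN" unfolding t NN_def by simp
  qed
  have finU: "finite (U v)" for v
  proof -
    have Wsub: "W u \<subseteq> V \<times> V" for u
      unfolding W_def using Mid_sub[of "fst u" "snd u"] Mid_sub[of "snd u" "fst u"] by blast
    have "U v \<subseteq> V \<times> V" unfolding U_def using Wsub by blast
    then show ?thesis using finite_subset finV by blast
  qed
  have finIn: "finite (In v)" for v
    unfolding In_def In by (simp add: Mid_fin)
  have cardIn: "card (In v) = fw E v" for v unfolding In_def by (rule card_In)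
  have "card (SIGMA v:V\<times>V. U v) \<le> card NN"
    using card_mono[OF finN hsub] card_image[OF inj_on_subset[OF inj subset_UNIV]] by simp
  moreover have "card (SIGMA v:V\<times>V. U v) = (\<Sum>v\<in>V\<times>V. card (U v))"
    using finV finU by (simp add: card_SigmaI)
  ultimately have "(\<Sum>v\<in>V\<times>V. card (U v)) \<le> card NN" by simp
  then have c1: "(\<Sum>v\<in>V\<times>V. real (card (U v))) \<le> real (card NN)"
    unfolding of_nat_sum[symmetric] of_nat_le_iff .
  have pv: "(\<Sum>u\<in>In v. 4 * real (fw E u) / real (fw E v)) \<le> real (card (U v))" for v
  proof (cases "In v = {}")
    case True then show ?thesis by simp
  next
    case False
    then have "card (In v) > 0" using finIn[of v] by (simp add: card_gt_0_iff)
    then have pos: "fw E v > 0" using cardIn[of v] by simp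
    have "card (W u) \<le> card (U v)" if "u \<in> In v" for u
      by (rule card_mono[OF finU]) (use that in \<open>auto simp: U_def\<close>)
    moreover have "4 * fw E u \<le> card (W u)" for u
    proof -
      have "card (W u) = (card (Mid E (fst u) (snd u)) + card (Mid E (snd u) (fst u)))^2"
        using Mid_disj Mid_fin by (simp add: W_def card_cartesian_product card_Un_disjoint power2_eq_square)
      then show ?thesis using sq4 by (simp add: fw_def mult.assoc)
    qed
    ultimately have n: "4 * fw E u \<le> card (U v)" if "u \<in> In v" for u
      using that le_trans by blast
    have "4 * real (fw E u) \<le> real (card (U v))" if "u \<in> In v" for u
    proof -
      have "real (4 * fw E u) \<le> real (card (U v))" using n[OF that] by (simp only: of_nat_le_iff)
      then show ?thesis by simp
    qed
    then have "(\<Sum>u\<in>In v. 4 * real (fw E u)) \<le> real (card (In v)) * real (card (U v))"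
      by (intro sum_bounded_above) auto
    then have "(\<Sum>u\<in>In v. 4 * real (fw E u)) / real (fw E v) \<le> real (card (U v))"
      using pos cardIn by (simp add: divide_le_eq mult.commute)
    then show ?thesis by (simp add: sum_divide_distrib)
  qed
  have c2: "(\<Sum>x\<in>T. 4 * real (fw E (snd x)) / real (fw E (fst x))) \<le> real (card NN)"
  proof -
    have "(\<Sum>x\<in>T. 4 * real (fw E (snd x)) / real (fw E (fst x)))
        = (\<Sum>v\<in>V\<times>V. \<Sum>u\<in>In v. 4 * real (fw E u) / real (fw E v))"
      unfolding T_def by (subst sum.Sigma) (auto simp: finV finIn split_beta)
    also have "\<dots> \<le> (\<Sum>v\<in>V\<times>V. real (card (U v)))" by (intro sum_mono pv)
    finally show ?thesis using c1 by linarith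
  qed
  have memT: "x \<in> T \<longleftrightarrow> (snd x, fst x) \<in> Rl E" for x
    using Rl_sub by (cases x) (auto simp: T_def In_def)
  have finT: "finite T" unfolding T_def using finV finIn by auto
  have cardT: "card T = card (Rl E)"
  proof -
    have "bij_betw (\<lambda>x. (snd x, fst x)) T (Rl E)"
      by (rule bij_betw_byWitness[where f'="\<lambda>x. (snd x, fst x)"]) (auto simp: memT)
    then show ?thesis by (rule bij_betw_same_card)
  qed
  define \<phi> where "\<phi> = (\<lambda>x::('a\<times>'a)\<times>('a\<times>'a). (prod.swap (snd x), fst x))"
  have bij: "bij_betw \<phi> T T"
  proof (rule bij_betw_byWitness[where f'="\<lambda>x. (snd x, prod.swap (fst x))"])
    show "\<forall>a\<in>T. (snd (\<phi> a), prod.swap (fst (\<phi> a))) = a" by (auto simp: \<phi>_def)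
    show "\<forall>a\<in>T. \<phi> (snd a, prod.swap (fst a)) = a" by (auto simp: \<phi>_def)
    show "\<phi> ` T \<subseteq> T"
    proof
      fix y assume "y \<in> \<phi> ` T"
      then obtain b d a c where x: "((b,d),(a,c)) \<in> T" and y: "y = \<phi> ((b,d),(a,c))" by auto
      have "((a,c),(b,d)) \<in> Rl E" using x memT by simp
      then have "((b,d),(c,a)) \<in> Rl E" by (rule rot)
      then show "y \<in> T" using y memT by (simp add: \<phi>_def)
    qed
    show "(\<lambda>x. (snd x, prod.swap (fst x))) ` T \<subseteq> T"
      by (auto simp: memT Rl_def)
  qed
  define g where "g x = real (fw E (snd x)) / real (fw E (fst x))" for x :: "('a\<times>'a)\<times>('a\<times>'a)"
  have gphi: "g (\<phi> x) = real (fw E (fst x)) / real (fw E (snd x))" for x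
    by (simp add: g_def \<phi>_def fw_swap)
  have possnd: "fw E (snd x) > 0" if "x \<in> T" for x
  proof -
    have "fst x \<in> {v. (snd x, v) \<in> Rl E}" using that memT by simp
    moreover have "finite {v. (snd x, v) \<in> Rl E}" by (simp add: Out Mid_fin)
    ultimately have "card {v. (snd x, v) \<in> Rl E} > 0" using card_gt_0_iff by blast
    then show ?thesis using card_Out[of "snd x"] by simp
  qed
  have posfst: "fw E (fst x) > 0" if "x \<in> T" for x
  proof -
    have "snd x \<in> In (fst x)" using that memT by (simp add: In_def)
    then have "card (In (fst x)) > 0" using finIn[of "fst x"] by (auto simp: card_gt_0_iff)
    then show ?thesis using cardIn[of "fst x"] by simp
  qed
  have "sum g T = sum (g \<circ> \<phi>) T" using sum.reindex_bij_betw[OF bij, of g] by simp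
  then have "2 * sum g T = (\<Sum>x\<in>T. g x + g (\<phi> x))" by (simp add: sum.distrib)
  also have "\<dots> \<ge> (\<Sum>x\<in>T. 2)"
  proof (rule sum_mono)
    fix x assume "x \<in> T"
    then have "real (fw E (snd x)) > 0" "real (fw E (fst x)) > 0" using possnd posfst by simp_all
    then have "2 \<le> real (fw E (snd x)) / real (fw E (fst x)) + real (fw E (fst x)) / real (fw E (snd x))"
      by (intro ratio)
    then show "2 \<le> g x + g (\<phi> x)" unfolding gphi by (simp add: g_def)
  qed
  finally have "real (card T) \<le> sum g T" by simp
  moreover have "(\<Sum>x\<in>T. 4 * real (fw E (snd x)) / real (fw E (fst x))) = 4 * sum g T"
    by (simp add: g_def sum_distrib_left)
  ultimately show ?thesis using c2 cardT unfolding NN_def[symmetric] by linarith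
qed

lemma S_bound:
  "card {(a, b, c, d). a \<in> V \<and> b \<in> V \<and> c \<in> V \<and> d \<in> V \<and>
                 distinct [a, b, c, d] \<and> induced_C4 E {a, b, c, d}} \<le> 6 * card (Rl E)"
  (is "card ?S \<le> _")
proof -
  define S where "S = ?S"
  define h1 where "h1 = (\<lambda>(a::'a,b::'a,c::'a,d::'a). ((a,c),(b,d)))"
  define h2 where "h2 = (\<lambda>(a::'a,b::'a,c::'a,d::'a). ((a,d),(b,c)))"
  define h3 where "h3 = (\<lambda>(a::'a,b::'a,c::'a,d::'a). ((a,b),(c,d)))"
  define h4 where "h4 = (\<lambda>(a::'a,b::'a,c::'a,d::'a). ((a,d),(c,b)))"
  define h5 where "h5 = (\<lambda>(a::'a,b::'a,c::'a,d::'a). ((a,b),(d,c)))"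
  define h6 where "h6 = (\<lambda>(a::'a,b::'a,c::'a,d::'a). ((a,c),(d,b)))"
  have finS: "finite S" unfolding S_def by (rule fin4[OF finV])
  have key: "h1 t \<in> Rl E \<or> h2 t \<in> Rl E \<or> h3 t \<in> Rl E \<or> h4 t \<in> Rl E \<or> h5 t \<in> Rl E \<or> h6 t \<in> Rl E"
    if tS: "t \<in> S" for t
  proof -
    obtain a b c d where t: "t = (a,b,c,d)" by (cases t)
    have "distinct [a,b,c,d] \<and> induced_C4 E {a,b,c,d}" using tS unfolding S_def t by simp
    then have ds: "distinct [a,b,c,d]" and ic: "induced_C4 E {a,b,c,d}" by blast+
    have ic': "card {a,b,c,d} = 4 \<and> (\<exists>w x y z. {a,b,c,d} = {w,x,y,z} \<and>
       E \<inter> ({a,b,c,d} \<times> {a,b,c,d}) = {(w, x), (x, y), (y, z), (z, w)})"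
      using ic by (simp only: induced_C4_def)
    then have c4: "card {a,b,c,d} = 4" by (rule conjunct1)
    obtain w x y z where X: "{a,b,c,d} = {w,x,y,z}"
      and EX: "E \<inter> ({a,b,c,d} \<times> {a,b,c,d}) = {(w, x), (x, y), (y, z), (z, w)}"
      using conjunct2[OF ic'] by (elim exE conjE)
    have "card (set [w,x,y,z]) = length [w,x,y,z]" using c4 X by simp
    then have dw: "distinct [w,x,y,z]" by (rule card_distinct)
    have es0: "{(w, x), (x, y), (y, z), (z, w)} \<subseteq> E" unfolding EX[symmetric] by (rule Int_lower1)
    have es: "(w,x) \<in> E" "(x,y) \<in> E" "(y,z) \<in> E" "(z,w) \<in> E" using es0 by simp_all
    have P: "((w,y),(x,z)) \<in> Rl E" using es by (simp add: Rl_def)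
    have rotP: "\<And>w x y z. ((w,y),(x,z)) \<in> Rl E \<Longrightarrow> ((x,z),(y,w)) \<in> Rl E" by (rule rot)
    have "(\<lambda>w x y z. ((w,y),(x,z)) \<in> Rl E) a b c d \<or> (\<lambda>w x y z. ((w,y),(x,z)) \<in> Rl E) a b d c \<or>
       (\<lambda>w x y z. ((w,y),(x,z)) \<in> Rl E) a c b d \<or> (\<lambda>w x y z. ((w,y),(x,z)) \<in> Rl E) a c d b \<or>
       (\<lambda>w x y z. ((w,y),(x,z)) \<in> Rl E) a d b c \<or> (\<lambda>w x y z. ((w,y),(x,z)) \<in> Rl E) a d c b"
      using six[OF ds dw X[symmetric], of "\<lambda>w x y z. ((w,y),(x,z)) \<in> Rl E", OF P rotP] by simp
    then show ?thesis by (simp add: t h1_def h2_def h3_def h4_def h5_def h6_def)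
  qed
  have bnd: "card {t\<in>S. h t \<in> Rl E} \<le> card (Rl E)" if "inj h" for h :: "'a\<times>'a\<times>'a\<times>'a \<Rightarrow> ('a\<times>'a)\<times>('a\<times>'a)"
    by (rule card_inj_on_le[OF inj_on_subset[OF that subset_UNIV] _ Rl_fin]) blast
  have injs: "inj h1" "inj h2" "inj h3" "inj h4" "inj h5" "inj h6"
    by (auto simp: inj_def h1_def h2_def h3_def h4_def h5_def h6_def)
  have sub: "S \<subseteq> {t\<in>S. h1 t \<in> Rl E} \<union> {t\<in>S. h2 t \<in> Rl E} \<union> {t\<in>S. h3 t \<in> Rl E}
      \<union> {t\<in>S. h4 t \<in> Rl E} \<union> {t\<in>S. h5 t \<in> Rl E} \<union> {t\<in>S. h6 t \<in> Rl E}"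
    using key by blast
  have fu: "finite ({t\<in>S. h1 t \<in> Rl E} \<union> {t\<in>S. h2 t \<in> Rl E} \<union> {t\<in>S. h3 t \<in> Rl E}
      \<union> {t\<in>S. h4 t \<in> Rl E} \<union> {t\<in>S. h5 t \<in> Rl E} \<union> {t\<in>S. h6 t \<in> Rl E})"
    using finS by simp
  have "card S \<le> card ({t\<in>S. h1 t \<in> Rl E} \<union> {t\<in>S. h2 t \<in> Rl E} \<union> {t\<in>S. h3 t \<in> Rl E}
      \<union> {t\<in>S. h4 t \<in> Rl E} \<union> {t\<in>S. h5 t \<in> Rl E} \<union> {t\<in>S. h6 t \<in> Rl E})"
    by (rule card_mono[OF fu sub])
  also have "\<dots> \<le> card {t\<in>S. h1 t \<in> Rl E} + card {t\<in>S. h2 t \<in> Rl E} + card {t\<in>S. h3 t \<in> Rl E}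
      + card {t\<in>S. h4 t \<in> Rl E} + card {t\<in>S. h5 t \<in> Rl E} + card {t\<in>S. h6 t \<in> Rl E}"
    by (meson card_Un_le add_le_mono le_refl order_trans)
  also have "\<dots> \<le> 6 * card (Rl E)" using bnd[OF injs(1)] bnd[OF injs(2)] bnd[OF injs(3)]
      bnd[OF injs(4)] bnd[OF injs(5)] bnd[OF injs(6)] by linarith
  finally show ?thesis unfolding S_def .
qed

end

theorem mainTheorem17:
  fixes V :: "'a set" and E :: "('a \<times> 'a) set"
  assumes "digraph V E" and "three_free E"
  shows "real (card {(p, q, r, s). p \<in> V \<and> q \<in> V \<and> r \<in> V \<and> s \<in> V \<and>
                 \<not> (\<exists>v1 v2 v3 v4. dpath4 E v1 v2 v3 v4 \<and> {v1, v2, v3, v4} = {p, q, r, s})})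
         \<ge> 2 / 3 * real (card {(a, b, c, d). a \<in> V \<and> b \<in> V \<and> c \<in> V \<and> d \<in> V \<and>
                 distinct [a, b, c, d] \<and> induced_C4 E {a, b, c, d}})"
  by (rule final_arith[OF N_bound[OF assms] S_bound[OF assms]])

end
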